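(* Let $G$ be an amenable (discrete) group, let $(X,u)$ and $(Y,v)$ be $G$-spaces with $X$ $G$-complemented in its bidual, and let $\Omega:Y\curvearrowright X$ be a quasi-linear map between them. Assume that for every $g\in G$ there is a linear map $L_g:Y_{00}\to X_\infty$ such that $T_g=\begin{pmatrix}u(g)&L_g\\0&v(g)\end{pmatrix}$, i.e. $T_g(x,y)=(u(g)x+L_gy,v(g)y)$, is a bounded invertible operator on $X\oplus_\Omega Y$, with $\sup_{g\in G}\|T_g\|\|T_g^{-1}\|<\infty$. Then the action of $G$ is compatible with $\Omega$, and the associated derivation $g\mapsto d(g)$ can be chosen so that $d(g)-L_g$ maps $Y_{00}$ into $X$ with $\sup_{g}\sup_{y\in Y_{00},\|y\|\le1}\|d(g)y-L_gy\|_X<\infty$.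
   Context: $G$-space: Banach space with bounded action $g\mapsto u(g)$. A quasi-linear map $\Omega:Y\curvearrowright X$ between $G$-spaces $(Y,v),(X,u)$ is a homogeneous map $\Omega:Y_{00}\to X_\infty$, with $Y_{00}\subseteq Y$ dense and $v(G)$-invariant, $X_\infty\supseteq X$ a vector space to which $u$ extends linearly, and $\|\Omega(y+y')-\Omega y-\Omega y'\|_X\le C(\|y\|+\|y'\|)$. $X\oplus_\Omega Y$ is the completion of $\{(x,y)\in X_\infty\times Y_{00}:x-\Omega y\in X\}$ under $\|x-\Omega y\|_X+\|y\|_Y$. A derivation is a map $g\mapsto d(g)$, $d(g):Y_{00}\to X_\infty$ linear, with $d(gh)=u(g)d(h)+d(g)v(h)$. The action is compatible with $\Omega$ if there is a derivation $d$ and $C$ with $\|u(g)\Omega y-\Omega v(g)y+d(g)y\|_X\le C\|y\|_Y$ for all $g,y$; equivalently $g\mapsto\begin{pmatrix}u(g)&d(g)\\0&v(g)\end{pmatrix}$ is a bounded representation on $X\oplus_\Omega Y$. $X$ is $G$-complemented in its bidual if there is a bounded projection $P:X^{**}\to X$ with $Pu(g)^{**}=u(g)P$. *)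

theory Defs
  imports "HOL-Analysis.Analysis" "HOL-Algebra.Group"
begin

definition amenable :: "('g, 'b) monoid_scheme \<Rightarrow> bool" where
  "amenable G \<longleftrightarrow> (\<exists>m :: ('g \<Rightarrow> real) \<Rightarrow> real.
     (\<forall>f f'. (\<forall>x\<in>carrier G. f x = f' x) \<longrightarrow> m f = m f') \<and>
     (\<forall>f f'. bounded (f ` carrier G) \<and> bounded (f' ` carrier G) \<longrightarrow>
        m (\<lambda>x. f x + f' x) = m f + m f') \<and>
     (\<forall>c f. bounded (f ` carrier G) \<longrightarrow> m (\<lambda>x. c * f x) = c * m f) \<and>
     (\<forall>f. bounded (f ` carrier G) \<and> (\<forall>x\<in>carrier G. 0 \<le> f x) \<longrightarrow> 0 \<le> m f) \<and>
     m (\<lambda>x. 1) = 1 \<and>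
     (\<forall>f g. bounded (f ` carrier G) \<and> g \<in> carrier G \<longrightarrow>
        m (\<lambda>x. f (g \<otimes>\<^bsub>G\<^esub> x)) = m f))"

definition G_space :: "('g, 'b) monoid_scheme \<Rightarrow> ('g \<Rightarrow> ('x::banach \<Rightarrow>\<^sub>L 'x)) \<Rightarrow> bool" where
  "G_space G u \<longleftrightarrow> group G \<and>
     (\<forall>g\<in>carrier G. \<forall>h\<in>carrier G. u (g \<otimes>\<^bsub>G\<^esub> h) = u g o\<^sub>L u h) \<and>
     u \<one>\<^bsub>G\<^esub> = id_blinfun \<and>
     (\<exists>C. \<forall>g\<in>carrier G. norm (u g) \<le> C)"

definition adj :: "('a::real_normed_vector \<Rightarrow>\<^sub>L 'c::real_normed_vector) \<Rightarrow>
    (('c \<Rightarrow>\<^sub>L real) \<Rightarrow>\<^sub>L ('a \<Rightarrow>\<^sub>L real))" where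
  "adj T = Blinfun (\<lambda>f. f o\<^sub>L T)"

definition bidual_emb :: "'a::real_normed_vector \<Rightarrow> (('a \<Rightarrow>\<^sub>L real) \<Rightarrow>\<^sub>L real)" where
  "bidual_emb x = Blinfun (\<lambda>f. blinfun_apply f x)"

definition G_complemented_in_bidual ::
    "('g, 'b) monoid_scheme \<Rightarrow> ('g \<Rightarrow> ('x::banach \<Rightarrow>\<^sub>L 'x)) \<Rightarrow> bool" where
  "G_complemented_in_bidual G u \<longleftrightarrow>
     (\<exists>P :: ((('x \<Rightarrow>\<^sub>L real) \<Rightarrow>\<^sub>L real) \<Rightarrow>\<^sub>L 'x).
        (\<forall>x. blinfun_apply P (bidual_emb x) = x) \<and>
        (\<forall>g\<in>carrier G. P o\<^sub>L adj (adj (u g)) = u g o\<^sub>L P))"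

text \<open>X is embedded into the ambient vector space X_infinity (a type 'z) by an injective linear
map \<iota>; "z \<in> X" means z \<in> range \<iota>, and the X-norm of such z is the norm of its preimage.\<close>

definition nX :: "('x::real_normed_vector \<Rightarrow> 'z) \<Rightarrow> 'z \<Rightarrow> real" where
  "nX \<iota> z = norm (inv_into UNIV \<iota> z)"

definition extends_action ::
    "('g, 'b) monoid_scheme \<Rightarrow> ('x::real_normed_vector \<Rightarrow> 'z::real_vector)
      \<Rightarrow> ('g \<Rightarrow> ('x \<Rightarrow>\<^sub>L 'x)) \<Rightarrow> ('g \<Rightarrow> 'z \<Rightarrow> 'z) \<Rightarrow> bool" where
  "extends_action G \<iota> u uinf \<longleftrightarrow>
     (\<forall>g\<in>carrier G. linear (uinf g)) \<and>
     (\<forall>g\<in>carrier G. \<forall>x. uinf g (\<iota> x) = \<iota> (u g x)) \<and>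
     (\<forall>g\<in>carrier G. \<forall>h\<in>carrier G. uinf (g \<otimes>\<^bsub>G\<^esub> h) = uinf g \<circ> uinf h) \<and>
     uinf \<one>\<^bsub>G\<^esub> = id"

definition quasi_linear ::
    "('x::real_normed_vector \<Rightarrow> 'z::real_vector) \<Rightarrow> 'y::real_normed_vector set \<Rightarrow> ('y \<Rightarrow> 'z) \<Rightarrow> bool" where
  "quasi_linear \<iota> Y00 \<Omega> \<longleftrightarrow>
     (\<forall>y\<in>Y00. \<forall>c. \<Omega> (c *\<^sub>R y) = c *\<^sub>R \<Omega> y) \<and>
     (\<exists>C. \<forall>y\<in>Y00. \<forall>y'\<in>Y00.
        \<Omega> (y + y') - \<Omega> y - \<Omega> y' \<in> range \<iota> \<and>
        nX \<iota> (\<Omega> (y + y') - \<Omega> y - \<Omega> y') \<le> C * (norm y + norm y'))"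

definition linear_on :: "'y::real_vector set \<Rightarrow> ('y \<Rightarrow> 'z::real_vector) \<Rightarrow> bool" where
  "linear_on Y00 f \<longleftrightarrow> (\<forall>y\<in>Y00. \<forall>y'\<in>Y00. \<forall>a b. f (a *\<^sub>R y + b *\<^sub>R y') = a *\<^sub>R f y + b *\<^sub>R f y')"

definition tw_dom :: "('x \<Rightarrow> 'z::real_vector) \<Rightarrow> ('y \<Rightarrow> 'z) \<Rightarrow> 'y set \<Rightarrow> ('z \<times> 'y) set" where
  "tw_dom \<iota> \<Omega> Y00 = {(x, y). y \<in> Y00 \<and> x - \<Omega> y \<in> range \<iota>}"

definition tw_qnorm :: "('x::real_normed_vector \<Rightarrow> 'z::real_vector) \<Rightarrow> ('y::real_normed_vector \<Rightarrow> 'z)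
    \<Rightarrow> 'z \<times> 'y \<Rightarrow> real" where
  "tw_qnorm \<iota> \<Omega> p = nX \<iota> (fst p - \<Omega> (snd p)) + norm (snd p)"

definition tw_op :: "('z \<Rightarrow> 'z::real_vector) \<Rightarrow> ('y \<Rightarrow> 'y) \<Rightarrow> ('y \<Rightarrow> 'z) \<Rightarrow> 'z \<times> 'y \<Rightarrow> 'z \<times> 'y" where
  "tw_op ug vg Lg p = (ug (fst p) + Lg (snd p), vg (snd p))"

text \<open>T is (the restriction to the dense domain D of) a bounded invertible operator on the
completion X (+)_Omega Y with norm T \<le> a and norm of T inverse \<le> b: T maps D into D, is bounded by a,
bounded below by 1/b, and has dense range.\<close>

definition tw_iso_bounds ::
    "('x::real_normed_vector \<Rightarrow> 'z::real_vector) \<Rightarrow> ('y::real_normed_vector \<Rightarrow> 'z) \<Rightarrow> 'y set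
      \<Rightarrow> ('z \<times> 'y \<Rightarrow> 'z \<times> 'y) \<Rightarrow> real \<Rightarrow> real \<Rightarrow> bool" where
  "tw_iso_bounds \<iota> \<Omega> Y00 T a b \<longleftrightarrow>
     (let D = tw_dom \<iota> \<Omega> Y00; \<rho> = tw_qnorm \<iota> \<Omega> in
       0 \<le> a \<and> 0 \<le> b \<and>
       (\<forall>p\<in>D. T p \<in> D) \<and>
       (\<forall>p\<in>D. \<rho> (T p) \<le> a * \<rho> p) \<and>
       (\<forall>p\<in>D. \<rho> p \<le> b * \<rho> (T p)) \<and>
       (\<forall>p\<in>D. \<forall>e>0. \<exists>q\<in>D. \<rho> (T q - p) < e))"

definition derivation ::
    "('g, 'b) monoid_scheme \<Rightarrow> 'y set \<Rightarrow> ('g \<Rightarrow> 'z \<Rightarrow> 'z::real_vector) \<Rightarrow> ('g \<Rightarrow> ('y::real_normed_vector \<Rightarrow>\<^sub>L 'y))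
      \<Rightarrow> ('g \<Rightarrow> 'y \<Rightarrow> 'z) \<Rightarrow> bool" where
  "derivation G Y00 uinf v d \<longleftrightarrow>
     (\<forall>g\<in>carrier G. linear_on Y00 (d g)) \<and>
     (\<forall>g\<in>carrier G. \<forall>h\<in>carrier G. \<forall>y\<in>Y00.
        d (g \<otimes>\<^bsub>G\<^esub> h) y = uinf g (d h y) + d g (v h y))"

definition compatible_via ::
    "('g, 'b) monoid_scheme \<Rightarrow> ('x::real_normed_vector \<Rightarrow> 'z::real_vector) \<Rightarrow> 'y set
      \<Rightarrow> ('g \<Rightarrow> 'z \<Rightarrow> 'z) \<Rightarrow> ('g \<Rightarrow> ('y::real_normed_vector \<Rightarrow>\<^sub>L 'y)) \<Rightarrow> ('y \<Rightarrow> 'z)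
      \<Rightarrow> ('g \<Rightarrow> 'y \<Rightarrow> 'z) \<Rightarrow> bool" where
  "compatible_via G \<iota> Y00 uinf v \<Omega> d \<longleftrightarrow>
     derivation G Y00 uinf v d \<and>
     (\<exists>C. \<forall>g\<in>carrier G. \<forall>y\<in>Y00.
        uinf g (\<Omega> y) - \<Omega> (v g y) + d g y \<in> range \<iota> \<and>
        nX \<iota> (uinf g (\<Omega> y) - \<Omega> (v g y) + d g y) \<le> C * norm y)"

end

theory Submission
  imports Defs
begin

locale avg_ctx =
  fixes G :: "('g, 'b) monoid_scheme" and m :: "('g \<Rightarrow> real) \<Rightarrow> real"
    and P :: "((('x::banach \<Rightarrow>\<^sub>L real) \<Rightarrow>\<^sub>L real) \<Rightarrow>\<^sub>L 'x)"
  assumes grp: "group G"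
    and mcong: "\<And>f f'. (\<forall>x\<in>carrier G. f x = f' x) \<Longrightarrow> m f = m f'"
    and madd: "\<And>f f'. bounded (f ` carrier G) \<Longrightarrow> bounded (f' ` carrier G) \<Longrightarrow>
        m (\<lambda>x. f x + f' x) = m f + m f'"
    and mscale: "\<And>c f. bounded (f ` carrier G) \<Longrightarrow> m (\<lambda>x. c * f x) = c * m f"
    and mpos: "\<And>f. bounded (f ` carrier G) \<Longrightarrow> (\<forall>x\<in>carrier G. 0 \<le> f x) \<Longrightarrow> 0 \<le> m f"
    and mone: "m (\<lambda>x. 1) = 1"
    and minv: "\<And>f g. bounded (f ` carrier G) \<Longrightarrow> g \<in> carrier G \<Longrightarrow>
        m (\<lambda>x. f (g \<otimes>\<^bsub>G\<^esub> x)) = m f"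
    and Pemb: "\<And>x. blinfun_apply P (bidual_emb x) = x"
begin

lemma bdd_of:
  assumes "\<forall>k\<in>carrier G. \<bar>f k\<bar> \<le> (B::real)" shows "bounded (f ` carrier G)"
  unfolding bounded_real by (intro exI[of _ B]) (use assms in auto)

lemma mconst: "m (\<lambda>x. c) = c"
proof -
  have b: "bounded ((\<lambda>x. 1::real) ` carrier G)" by (rule bdd_of[where B=1]) auto
  have "m (\<lambda>x. c * 1) = c * m (\<lambda>x. 1)" by (rule mscale[OF b])
  thus ?thesis using mone by simp
qed

lemma mbound:
  assumes "\<forall>k\<in>carrier G. \<bar>f k\<bar> \<le> B"
  shows "\<bar>m f\<bar> \<le> B"
proof -
  have bf: "bounded (f ` carrier G)" using bdd_of assms by blast
  have bc: "bounded ((\<lambda>x. B) ` carrier G)" by (rule bdd_of[where B="\<bar>B\<bar>"]) auto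
  have bn: "bounded ((\<lambda>x. (-1) * f x) ` carrier G)" by (rule bdd_of[where B=B]) (use assms in auto)
  have "m (\<lambda>x. B + (-1) * f x) = m (\<lambda>x. B) + m (\<lambda>x. (-1) * f x)"
    using madd[OF bc bn] by simp
  also have "\<dots> = B - m f" using mconst mscale[OF bf, of "-1"] by simp
  finally have 1: "m (\<lambda>x. B + (-1) * f x) = B - m f" .
  have "0 \<le> m (\<lambda>x. B + (-1) * f x)"
    by (rule mpos) (rule bdd_of[where B="2*\<bar>B\<bar>"], use assms in force, use assms in force)
  hence a: "m f \<le> B" using 1 by simp
  have "m (\<lambda>x. B + f x) = B + m f" using madd[OF bc bf] mconst by simp
  moreover have "0 \<le> m (\<lambda>x. B + f x)"
    by (rule mpos) (rule bdd_of[where B="2*\<bar>B\<bar>"], use assms in force, use assms in force)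
  ultimately show ?thesis using a by simp
qed

definition phi :: "('g \<Rightarrow> 'x) \<Rightarrow> ('x \<Rightarrow>\<^sub>L real) \<Rightarrow> real" where
  "phi w f = m (\<lambda>k. blinfun_apply f (w k))"

definition avg :: "('g \<Rightarrow> 'x) \<Rightarrow> 'x" where
  "avg w = blinfun_apply P (Blinfun (phi w))"

lemma car_ne: "\<one>\<^bsub>G\<^esub> \<in> carrier G" using grp by (simp add: group.is_monoid monoid.one_closed)

lemma phi_bdd:
  fixes f :: "'x \<Rightarrow>\<^sub>L real" and w :: "'g \<Rightarrow> 'x"
  assumes "\<forall>k\<in>carrier G. norm (w k) \<le> B"
  shows "bounded ((\<lambda>k. blinfun_apply f (w k)) ` carrier G)"
proof -
  have "\<forall>k\<in>carrier G. \<bar>blinfun_apply f (w k)\<bar> \<le> norm f * B"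
  proof
    fix k assume "k \<in> carrier G"
    have "\<bar>blinfun_apply f (w k)\<bar> \<le> norm f * norm (w k)" using norm_blinfun[of f "w k"] by simp
    also have "\<dots> \<le> norm f * B" using assms \<open>k \<in> carrier G\<close> by (simp add: mult_left_mono)
    finally show "\<bar>blinfun_apply f (w k)\<bar> \<le> norm f * B" .
  qed
  thus ?thesis by (rule bdd_of)
qed

lemma phi_bl:
  assumes "\<forall>k\<in>carrier G. norm (w k) \<le> B"
  shows "bounded_linear (phi w)"
proof (rule bounded_linear_intro[where K = B])
  fix f f' :: "'x \<Rightarrow>\<^sub>L real"
  show "phi w (f + f') = phi w f + phi w f'"
    unfolding phi_def using madd[OF phi_bdd[OF assms] phi_bdd[OF assms]]
    by (simp add: blinfun.add_left)
next
  fix r and f :: "'x \<Rightarrow>\<^sub>L real"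
  show "phi w (r *\<^sub>R f) = r *\<^sub>R phi w f"
    unfolding phi_def using mscale[OF phi_bdd[OF assms]] by (simp add: blinfun.scaleR_left)
next
  fix f :: "'x \<Rightarrow>\<^sub>L real"
  have "\<forall>k\<in>carrier G. \<bar>blinfun_apply f (w k)\<bar> \<le> norm f * B"
  proof
    fix k assume "k \<in> carrier G"
    have "\<bar>blinfun_apply f (w k)\<bar> \<le> norm f * norm (w k)" using norm_blinfun[of f "w k"] by simp
    also have "\<dots> \<le> norm f * B" using assms \<open>k \<in> carrier G\<close> by (simp add: mult_left_mono)
    finally show "\<bar>blinfun_apply f (w k)\<bar> \<le> norm f * B" .
  qed
  from mbound[OF this] show "norm (phi w f) \<le> norm f * B" unfolding phi_def by simp
qed

lemma B_nonneg: fixes w :: "'g \<Rightarrow> 'x" shows "\<forall>k\<in>carrier G. norm (w k) \<le> B \<Longrightarrow> 0 \<le> B"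
  using car_ne by (meson norm_ge_zero order_trans)

lemma avg_norm:
  assumes "\<forall>k\<in>carrier G. norm (w k) \<le> B"
  shows "norm (avg w) \<le> norm P * B"
proof -
  have n: "norm (Blinfun (phi w)) \<le> B"
  proof (rule norm_blinfun_bound)
    show "0 \<le> B" using B_nonneg[OF assms] .
    fix f
    have "\<forall>k\<in>carrier G. \<bar>blinfun_apply f (w k)\<bar> \<le> norm f * B"
    proof
      fix k assume "k \<in> carrier G"
      have "\<bar>blinfun_apply f (w k)\<bar> \<le> norm f * norm (w k)" using norm_blinfun[of f "w k"] by simp
      also have "\<dots> \<le> norm f * B" using assms \<open>k \<in> carrier G\<close> by (simp add: mult_left_mono)
      finally show "\<bar>blinfun_apply f (w k)\<bar> \<le> norm f * B" .
    qed
    from mbound[OF this] show "norm (blinfun_apply (Blinfun (phi w)) f) \<le> B * norm f"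
      unfolding bounded_linear_Blinfun_apply[OF phi_bl[OF assms]] phi_def by (simp add: mult.commute)
  qed
  have "norm (avg w) \<le> norm P * norm (Blinfun (phi w))" unfolding avg_def by (rule norm_blinfun)
  also have "\<dots> \<le> norm P * B" using n by (simp add: mult_left_mono)
  finally show ?thesis .
qed

lemma avg_cong: "(\<forall>k\<in>carrier G. w k = w' k) \<Longrightarrow> avg w = avg w'"
proof -
  assume a: "\<forall>k\<in>carrier G. w k = w' k"
  have "phi w = phi w'" unfolding phi_def
    by (rule ext, rule mcong) (use a in simp)
  thus ?thesis unfolding avg_def by simp
qed

lemma avg_const: "avg (\<lambda>k. x) = x"
proof -
  have "phi (\<lambda>k. x) = blinfun_apply (bidual_emb x)"
    unfolding phi_def bidual_emb_def
    by (subst bounded_linear_Blinfun_apply) (auto intro: bounded_bilinear.bounded_linear_left[OF bounded_bilinear_blinfun_apply] simp: mconst)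
  thus ?thesis unfolding avg_def using Pemb by (simp add: blinfun_apply_inverse)
qed

lemma avg_add:
  assumes "\<forall>k\<in>carrier G. norm (w k) \<le> B" "\<forall>k\<in>carrier G. norm (w' k) \<le> B'"
  shows "avg (\<lambda>k. w k + w' k) = avg w + avg w'"
proof -
  have b: "\<forall>k\<in>carrier G. norm (w k + w' k) \<le> B + B'"
    using assms by (meson add_mono norm_triangle_ineq order_trans)
  have "Blinfun (phi (\<lambda>k. w k + w' k)) = Blinfun (phi w) + Blinfun (phi w')"
  proof (rule blinfun_eqI)
    fix f
    show "blinfun_apply (Blinfun (phi (\<lambda>k. w k + w' k))) f = blinfun_apply (Blinfun (phi w) + Blinfun (phi w')) f"
      unfolding blinfun.add_left bounded_linear_Blinfun_apply[OF phi_bl[OF b]]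
        bounded_linear_Blinfun_apply[OF phi_bl[OF assms(1)]] bounded_linear_Blinfun_apply[OF phi_bl[OF assms(2)]]
      unfolding phi_def using madd[OF phi_bdd[OF assms(1)] phi_bdd[OF assms(2)]]
      by (simp add: blinfun.add_right)
  qed
  thus ?thesis unfolding avg_def by (simp add: blinfun.add_right)
qed

lemma avg_scale:
  assumes "\<forall>k\<in>carrier G. norm (w k) \<le> B"
  shows "avg (\<lambda>k. c *\<^sub>R w k) = c *\<^sub>R avg w"
proof -
  have b: "\<forall>k\<in>carrier G. norm (c *\<^sub>R w k) \<le> \<bar>c\<bar> * B"
    using assms by (simp add: mult_left_mono)
  have "Blinfun (phi (\<lambda>k. c *\<^sub>R w k)) = c *\<^sub>R Blinfun (phi w)"
  proof (rule blinfun_eqI)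
    fix f
    show "blinfun_apply (Blinfun (phi (\<lambda>k. c *\<^sub>R w k))) f = blinfun_apply (c *\<^sub>R Blinfun (phi w)) f"
      unfolding blinfun.scaleR_left bounded_linear_Blinfun_apply[OF phi_bl[OF b]]
        bounded_linear_Blinfun_apply[OF phi_bl[OF assms(1)]]
      unfolding phi_def using mscale[OF phi_bdd[OF assms(1)]]
      by (simp add: blinfun.scaleR_right)
  qed
  thus ?thesis unfolding avg_def by (simp add: blinfun.scaleR_right)
qed

lemma avg_transl:
  assumes "\<forall>k\<in>carrier G. norm (w k) \<le> B" "h \<in> carrier G"
  shows "avg (\<lambda>k. w (h \<otimes>\<^bsub>G\<^esub> k)) = avg w"
proof -
  have "phi (\<lambda>k. w (h \<otimes>\<^bsub>G\<^esub> k)) = phi w"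
    unfolding phi_def by (rule ext, rule minv[OF phi_bdd[OF assms(1)] assms(2)])
  thus ?thesis unfolding avg_def by simp
qed

lemma adj_apply: "blinfun_apply (adj T) f = f o\<^sub>L T"
  unfolding adj_def
  by (subst bounded_linear_Blinfun_apply)
     (auto intro: bounded_bilinear.bounded_linear_left[OF bounded_bilinear_blinfun_compose])

lemma avg_comm:
  assumes "\<forall>k\<in>carrier G. norm (w k) \<le> B"
    and TP: "P o\<^sub>L adj (adj T) = T o\<^sub>L P"
  shows "blinfun_apply T (avg w) = avg (\<lambda>k. blinfun_apply T (w k))"
proof -
  have b: "\<forall>k\<in>carrier G. norm (blinfun_apply T (w k)) \<le> norm T * B"
    using assms(1) by (meson norm_blinfun mult_left_mono norm_ge_zero order_trans)
  have e: "blinfun_apply (adj (adj T)) (Blinfun (phi w)) = Blinfun (phi (\<lambda>k. blinfun_apply T (w k)))"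
  proof (rule blinfun_eqI)
    fix f
    show "blinfun_apply (blinfun_apply (adj (adj T)) (Blinfun (phi w))) f =
          blinfun_apply (Blinfun (phi (\<lambda>k. blinfun_apply T (w k)))) f"
      unfolding adj_apply blinfun_apply_blinfun_compose bounded_linear_Blinfun_apply[OF phi_bl[OF b]]
        bounded_linear_Blinfun_apply[OF phi_bl[OF assms(1)]]
      unfolding phi_def by (simp add: blinfun_apply_blinfun_compose)
  qed
  have "blinfun_apply T (avg w) = blinfun_apply (T o\<^sub>L P) (Blinfun (phi w))"
    unfolding avg_def by simp
  also have "\<dots> = blinfun_apply P (blinfun_apply (adj (adj T)) (Blinfun (phi w)))"
    unfolding TP[symmetric] by simp
  also have "\<dots> = avg (\<lambda>k. blinfun_apply T (w k))" unfolding e avg_def ..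
  finally show ?thesis .
qed

end

theorem mainTheorem14:
  fixes G :: "('g, 'b) monoid_scheme"
    and u :: "'g \<Rightarrow> ('x::banach \<Rightarrow>\<^sub>L 'x)"
    and v :: "'g \<Rightarrow> ('y::banach \<Rightarrow>\<^sub>L 'y)"
    and \<iota> :: "'x \<Rightarrow> 'z::real_vector"
    and uinf :: "'g \<Rightarrow> 'z \<Rightarrow> 'z"
    and Y00 :: "'y set"
    and \<Omega> :: "'y \<Rightarrow> 'z"
    and L :: "'g \<Rightarrow> 'y \<Rightarrow> 'z"
  assumes "group G" and "amenable G"
    and "G_space G u" and "G_space G v"
    and "G_complemented_in_bidual G u"
    and "linear \<iota>" and "inj \<iota>"
    and "extends_action G \<iota> u uinf"
    and "subspace Y00" and "closure Y00 = UNIV"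
    and "\<forall>g\<in>carrier G. v g ` Y00 \<subseteq> Y00"
    and "quasi_linear \<iota> Y00 \<Omega>"
    and "\<forall>g\<in>carrier G. linear_on Y00 (L g)"
    and "\<exists>K. \<forall>g\<in>carrier G. \<exists>a b. a * b \<le> K \<and>
           tw_iso_bounds \<iota> \<Omega> Y00 (tw_op (uinf g) (blinfun_apply (v g)) (L g)) a b"
  shows "\<exists>d. compatible_via G \<iota> Y00 uinf v \<Omega> d \<and>
           (\<exists>C'. \<forall>g\<in>carrier G. \<forall>y\<in>Y00.
              d g y - L g y \<in> range \<iota> \<and>
              (norm y \<le> 1 \<longrightarrow> nX \<iota> (d g y - L g y) \<le> C'))"
proof -
  note grp = assms(1)
  have one: "\<one>\<^bsub>G\<^esub> \<in> carrier G" using grp by (simp add: group.is_monoid monoid.one_closed)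
  have mc: "\<And>g h. g \<in> carrier G \<Longrightarrow> h \<in> carrier G \<Longrightarrow> g \<otimes>\<^bsub>G\<^esub> h \<in> carrier G"
    using grp by (simp add: group.is_monoid monoid.m_closed)
  have ic: "\<And>g. g \<in> carrier G \<Longrightarrow> inv\<^bsub>G\<^esub> g \<in> carrier G"
    using grp by (simp add: group.inv_closed)
  have assoc: "\<And>g h k. g \<in> carrier G \<Longrightarrow> h \<in> carrier G \<Longrightarrow> k \<in> carrier G \<Longrightarrow>
      g \<otimes>\<^bsub>G\<^esub> h \<otimes>\<^bsub>G\<^esub> k = g \<otimes>\<^bsub>G\<^esub> (h \<otimes>\<^bsub>G\<^esub> k)"
    using grp by (simp add: group.is_monoid monoid.m_assoc)
  from assms(2) obtain m :: "('g \<Rightarrow> real) \<Rightarrow> real" where m: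
     "(\<forall>f f'. (\<forall>x\<in>carrier G. f x = f' x) \<longrightarrow> m f = m f')"
     "(\<forall>f f'. bounded (f ` carrier G) \<and> bounded (f' ` carrier G) \<longrightarrow>
        m (\<lambda>x. f x + f' x) = m f + m f')"
     "(\<forall>c f. bounded (f ` carrier G) \<longrightarrow> m (\<lambda>x. c * f x) = c * m f)"
     "(\<forall>f. bounded (f ` carrier G) \<and> (\<forall>x\<in>carrier G. 0 \<le> f x) \<longrightarrow> 0 \<le> m f)"
     "m (\<lambda>x. 1) = 1"
     "(\<forall>f g. bounded (f ` carrier G) \<and> g \<in> carrier G \<longrightarrow>
        m (\<lambda>x. f (g \<otimes>\<^bsub>G\<^esub> x)) = m f)"
    unfolding amenable_def by blast
  from assms(5) obtain P :: "(('x \<Rightarrow>\<^sub>L real) \<Rightarrow>\<^sub>L real) \<Rightarrow>\<^sub>L 'x" where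
    P1: "\<forall>x. blinfun_apply P (bidual_emb x) = x" and
    P2: "\<forall>g\<in>carrier G. P o\<^sub>L adj (adj (u g)) = u g o\<^sub>L P"
    unfolding G_complemented_in_bidual_def by blast
  interpret A: avg_ctx G m P
    by (rule avg_ctx.intro) (use grp m P1 in auto)
  from assms(3) obtain Cu where
    uc: "\<forall>g\<in>carrier G. \<forall>h\<in>carrier G. u (g \<otimes>\<^bsub>G\<^esub> h) = u g o\<^sub>L u h" and
    Cu: "\<forall>g\<in>carrier G. norm (u g) \<le> Cu"
    unfolding G_space_def by blast
  from assms(4) obtain Cv where
    vc: "\<forall>g\<in>carrier G. \<forall>h\<in>carrier G. v (g \<otimes>\<^bsub>G\<^esub> h) = v g o\<^sub>L v h" and
    v1: "v \<one>\<^bsub>G\<^esub> = id_blinfun" and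
    Cv: "\<forall>g\<in>carrier G. norm (v g) \<le> Cv"
    unfolding G_space_def by blast
  have Cu0: "0 \<le> Cu" using Cu one by (meson norm_ge_zero order_trans)
  have Cv0: "0 \<le> Cv" using Cv one by (meson norm_ge_zero order_trans)
  have ubd: "\<And>g x. g \<in> carrier G \<Longrightarrow> norm (blinfun_apply (u g) x) \<le> Cu * norm x"
    using Cu by (meson mult_right_mono norm_blinfun norm_ge_zero order_trans)
  have vbd: "\<And>g x. g \<in> carrier G \<Longrightarrow> norm (blinfun_apply (v g) x) \<le> Cv * norm x"
    using Cv by (meson mult_right_mono norm_blinfun norm_ge_zero order_trans)
  have vmul: "\<And>g h y. g \<in> carrier G \<Longrightarrow> h \<in> carrier G \<Longrightarrow>
      blinfun_apply (v (g \<otimes>\<^bsub>G\<^esub> h)) y = blinfun_apply (v g) (blinfun_apply (v h) y)"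
    using vc by simp
  have umul: "\<And>g h y. g \<in> carrier G \<Longrightarrow> h \<in> carrier G \<Longrightarrow>
      blinfun_apply (u (g \<otimes>\<^bsub>G\<^esub> h)) y = blinfun_apply (u g) (blinfun_apply (u h) y)"
    using uc by simp
  have vinv1: "\<And>k y. k \<in> carrier G \<Longrightarrow> blinfun_apply (v k) (blinfun_apply (v (inv\<^bsub>G\<^esub> k)) y) = y"
  proof -
    fix k y assume k: "k \<in> carrier G"
    have "blinfun_apply (v k) (blinfun_apply (v (inv\<^bsub>G\<^esub> k)) y) = blinfun_apply (v (k \<otimes>\<^bsub>G\<^esub> inv\<^bsub>G\<^esub> k)) y"
      using vmul k ic by simp
    also have "\<dots> = y" using grp k v1 by (simp add: group.r_inv)
    finally show "blinfun_apply (v k) (blinfun_apply (v (inv\<^bsub>G\<^esub> k)) y) = y" .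
  qed
  have vinv2: "\<And>k y. k \<in> carrier G \<Longrightarrow> blinfun_apply (v (inv\<^bsub>G\<^esub> k)) (blinfun_apply (v k) y) = y"
  proof -
    fix k y assume k: "k \<in> carrier G"
    have "blinfun_apply (v (inv\<^bsub>G\<^esub> k)) (blinfun_apply (v k) y) = blinfun_apply (v (inv\<^bsub>G\<^esub> k \<otimes>\<^bsub>G\<^esub> k)) y"
      using vmul k ic by simp
    also have "\<dots> = y" using grp k v1 by (simp add: group.l_inv)
    finally show "blinfun_apply (v (inv\<^bsub>G\<^esub> k)) (blinfun_apply (v k) y) = y" .
  qed
  have vY: "\<And>g y. g \<in> carrier G \<Longrightarrow> y \<in> Y00 \<Longrightarrow> blinfun_apply (v g) y \<in> Y00"
    using assms(11) by blast
  note lin = assms(6)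
  define iv where "iv = inv_into UNIV \<iota>"
  have ivi: "\<And>x. iv (\<iota> x) = x" unfolding iv_def using assms(7) by (simp add: inv_into_f_f)
  have iiv: "\<And>z. z \<in> range \<iota> \<Longrightarrow> \<iota> (iv z) = z" unfolding iv_def by (simp add: f_inv_into_f)
  have nXi: "\<And>x. nX \<iota> (\<iota> x) = norm x" unfolding nX_def using ivi iv_def by simp
  have iadd: "\<And>x x'. \<iota> (x + x') = \<iota> x + \<iota> x'" using lin by (simp add: linear_add)
  have idiff: "\<And>x x'. \<iota> (x - x') = \<iota> x - \<iota> x'" using lin by (simp add: linear_diff)
  have iscale: "\<And>c x. \<iota> (c *\<^sub>R x) = c *\<^sub>R \<iota> x" using lin by (simp add: linear_scale)
  have i0: "\<iota> 0 = 0" using lin by (simp add: linear_0)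
  from assms(8) have uinfl: "\<forall>g\<in>carrier G. linear (uinf g)"
    and uinfi: "\<forall>g\<in>carrier G. \<forall>x. uinf g (\<iota> x) = \<iota> (blinfun_apply (u g) x)"
    and uinfm: "\<forall>g\<in>carrier G. \<forall>h\<in>carrier G. uinf (g \<otimes>\<^bsub>G\<^esub> h) = uinf g \<circ> uinf h"
    unfolding extends_action_def by auto
  have Y0: "0 \<in> Y00" using assms(9) by (simp add: subspace_0)
  have Yadd: "\<And>y y'. y \<in> Y00 \<Longrightarrow> y' \<in> Y00 \<Longrightarrow> y + y' \<in> Y00" using assms(9) by (simp add: subspace_add)
  have Yscale: "\<And>c y. y \<in> Y00 \<Longrightarrow> c *\<^sub>R y \<in> Y00" using assms(9) by (simp add: subspace_scale)
  have Om0: "\<Omega> 0 = 0"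
  proof -
    have "\<Omega> (0 *\<^sub>R 0) = 0 *\<^sub>R \<Omega> 0" using assms(12) Y0 unfolding quasi_linear_def by blast
    thus ?thesis by simp
  qed
  have L0: "\<And>g. g \<in> carrier G \<Longrightarrow> L g 0 = 0"
  proof -
    fix g assume "g \<in> carrier G"
    hence "L g (0 *\<^sub>R 0 + 0 *\<^sub>R 0) = 0 *\<^sub>R L g 0 + 0 *\<^sub>R L g 0"
      using assms(13) Y0 unfolding linear_on_def by blast
    thus "L g 0 = 0" by simp
  qed
  obtain K where K: "\<forall>g\<in>carrier G. \<exists>a b. a * b \<le> K \<and>
           tw_iso_bounds \<iota> \<Omega> Y00 (tw_op (uinf g) (blinfun_apply (v g)) (L g)) a b"
    using assms(14) by blast
  define A where "A = max 0 (K * Cu)"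
  have A0: "0 \<le> A" unfolding A_def by simp
  define M where "M g y = uinf g (\<Omega> y) - \<Omega> (blinfun_apply (v g) y) + L g y" for g y
  have Mfacts: "M g y \<in> range \<iota> \<and> nX \<iota> (M g y) \<le> A * norm y" if g: "g \<in> carrier G" and y: "y \<in> Y00" for g y
  proof -
    obtain a b where ab: "a * b \<le> K" and tw: "tw_iso_bounds \<iota> \<Omega> Y00 (tw_op (uinf g) (blinfun_apply (v g)) (L g)) a b"
      using K g by blast
    let ?T = "tw_op (uinf g) (blinfun_apply (v g)) (L g)"
    let ?D = "tw_dom \<iota> \<Omega> Y00"
    let ?r = "tw_qnorm \<iota> \<Omega>"
    have a0: "0 \<le> a" and b0: "0 \<le> b" and Dinv: "\<forall>p\<in>?D. ?T p \<in> ?D"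
      and bd1: "\<forall>p\<in>?D. ?r (?T p) \<le> a * ?r p" and bd2: "\<forall>p\<in>?D. ?r p \<le> b * ?r (?T p)"
      using tw unfolding tw_iso_bounds_def Let_def by auto
    have pD: "(\<Omega> y, y) \<in> ?D" unfolding tw_dom_def using y i0 by (auto intro: range_eqI[of _ _ 0])
    have Tp: "?T (\<Omega> y, y) = (uinf g (\<Omega> y) + L g y, blinfun_apply (v g) y)" unfolding tw_op_def by simp
    have "uinf g (\<Omega> y) + L g y - \<Omega> (blinfun_apply (v g) y) \<in> range \<iota>"
    proof -
      have "?T (\<Omega> y, y) \<in> ?D" using Dinv pD by blast
      thus ?thesis unfolding Tp tw_dom_def by simp
    qed
    moreover have Meq: "uinf g (\<Omega> y) + L g y - \<Omega> (blinfun_apply (v g) y) = M g y" unfolding M_def by (simp add: algebra_simps)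
    ultimately have Mr: "M g y \<in> range \<iota>" by simp
    have nX0: "nX \<iota> 0 = 0" using nXi[of 0] i0 by simp
    have "?r (?T (\<Omega> y, y)) \<le> a * ?r (\<Omega> y, y)" using bd1 pD by blast
    hence "nX \<iota> (M g y) + norm (blinfun_apply (v g) y) \<le> a * norm y"
      unfolding Tp tw_qnorm_def using Meq nX0 by simp
    hence na: "nX \<iota> (M g y) \<le> a * norm y" using norm_ge_zero[of "blinfun_apply (v g) y"] by linarith
    show ?thesis
    proof (cases "\<exists>x0::'x. x0 \<noteq> 0")
      case True
      then obtain x0 :: 'x where x0: "x0 \<noteq> 0" by blast
      have p0D: "(\<iota> x0, 0) \<in> ?D" unfolding tw_dom_def using Y0 Om0 by auto
      have Tp0: "?T (\<iota> x0, 0) = (\<iota> (blinfun_apply (u g) x0), 0)"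
        unfolding tw_op_def using uinfi g L0 by simp
      have "?r (\<iota> x0, 0) \<le> b * ?r (?T (\<iota> x0, 0))" using bd2 p0D by blast
      hence "norm x0 \<le> b * norm (blinfun_apply (u g) x0)"
        unfolding Tp0 tw_qnorm_def using Om0 nXi by simp
      also have "\<dots> \<le> b * (Cu * norm x0)" using ubd[OF g] b0 by (simp add: mult_left_mono)
      finally have "1 * norm x0 \<le> (b * Cu) * norm x0" by (simp add: mult.assoc)
      hence bc: "1 \<le> b * Cu" using x0 by simp
      have "a = a * 1" by simp
      also have "\<dots> \<le> a * (b * Cu)" using mult_left_mono[OF bc a0] by simp
      also have "\<dots> = (a * b) * Cu" by simp
      also have "\<dots> \<le> K * Cu" using ab Cu0 by (simp add: mult_right_mono)
      finally have "a \<le> A" unfolding A_def by simp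
      hence "a * norm y \<le> A * norm y" by (simp add: mult_right_mono)
      thus ?thesis using Mr na by simp
    next
      case False
      hence "nX \<iota> (M g y) = 0" unfolding nX_def by simp
      thus ?thesis using Mr A0 by simp
    qed
  qed
  define mX where "mX g y = iv (M g y)" for g y
  have mXi: "\<And>g y. g \<in> carrier G \<Longrightarrow> y \<in> Y00 \<Longrightarrow> \<iota> (mX g y) = M g y"
    unfolding mX_def using Mfacts iiv by blast
  have mXn: "\<And>g y. g \<in> carrier G \<Longrightarrow> y \<in> Y00 \<Longrightarrow> norm (mX g y) \<le> A * norm y"
    unfolding mX_def using Mfacts unfolding nX_def iv_def by blast
  have uinf_range: "\<And>g z. g \<in> carrier G \<Longrightarrow> uinf g (\<iota> z) = \<iota> (blinfun_apply (u g) z)"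
    using uinfi by blast
  have uinf_add: "\<And>g z z'. g \<in> carrier G \<Longrightarrow> uinf g (z + z') = uinf g z + uinf g z'"
    using uinfl by (simp add: linear_add)
  have uinf_diff: "\<And>g z z'. g \<in> carrier G \<Longrightarrow> uinf g (z - z') = uinf g z - uinf g z'"
    using uinfl by (simp add: linear_diff)
  have uinf_scale: "\<And>g c z. g \<in> carrier G \<Longrightarrow> uinf g (c *\<^sub>R z) = c *\<^sub>R uinf g z"
    using uinfl by (simp add: linear_scale)
  have uinf_mul: "\<And>g h z. g \<in> carrier G \<Longrightarrow> h \<in> carrier G \<Longrightarrow> uinf (g \<otimes>\<^bsub>G\<^esub> h) z = uinf g (uinf h z)"
    using uinfm by simp
  define e where "e g h y = mX (g \<otimes>\<^bsub>G\<^esub> h) y - blinfun_apply (u g) (mX h y) - mX g (blinfun_apply (v h) y)" for g h y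
  have eL: "\<iota> (e g h y) = L (g \<otimes>\<^bsub>G\<^esub> h) y - uinf g (L h y) - L g (blinfun_apply (v h) y)"
    if g: "g \<in> carrier G" and h: "h \<in> carrier G" and y: "y \<in> Y00" for g h y
  proof -
    have "\<iota> (e g h y) = M (g \<otimes>\<^bsub>G\<^esub> h) y - uinf g (M h y) - M g (blinfun_apply (v h) y)"
      unfolding e_def idiff using mXi mc g h y vY uinf_range by metis
    also have "\<dots> = L (g \<otimes>\<^bsub>G\<^esub> h) y - uinf g (L h y) - L g (blinfun_apply (v h) y)"
      unfolding M_def using g h by (simp add: uinf_add uinf_diff uinf_mul vmul algebra_simps)
    finally show ?thesis .
  qed
  define Be where "Be = A * (1 + Cu + Cv)"
  have Be0: "0 \<le> Be" unfolding Be_def using A0 Cu0 Cv0 by simp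
  have ebd: "norm (e g h y) \<le> Be * norm y"
    if g: "g \<in> carrier G" and h: "h \<in> carrier G" and y: "y \<in> Y00" for g h y
  proof -
    have n1: "norm (mX (g \<otimes>\<^bsub>G\<^esub> h) y) \<le> A * norm y" using mXn mc g h y by blast
    have "norm (blinfun_apply (u g) (mX h y)) \<le> Cu * norm (mX h y)" using ubd g by blast
    also have "\<dots> \<le> Cu * (A * norm y)" using mXn h y Cu0 by (simp add: mult_left_mono)
    finally have n2: "norm (blinfun_apply (u g) (mX h y)) \<le> Cu * (A * norm y)" .
    have "norm (mX g (blinfun_apply (v h) y)) \<le> A * norm (blinfun_apply (v h) y)" using mXn g h y vY by blast
    also have "\<dots> \<le> A * (Cv * norm y)" using vbd h A0 by (simp add: mult_left_mono)
    finally have n3: "norm (mX g (blinfun_apply (v h) y)) \<le> A * (Cv * norm y)" .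
    have "norm (e g h y) \<le> norm (mX (g \<otimes>\<^bsub>G\<^esub> h) y) + norm (blinfun_apply (u g) (mX h y)) + norm (mX g (blinfun_apply (v h) y))"
      unfolding e_def by (meson norm_diff_triangle_ineq norm_triangle_ineq4 order_trans add_right_mono)
    also have "\<dots> \<le> A * norm y + Cu * (A * norm y) + A * (Cv * norm y)" using n1 n2 n3 by linarith
    also have "\<dots> = Be * norm y" unfolding Be_def by (simp add: algebra_simps)
    finally show ?thesis .
  qed
  have ecoc: "e (g \<otimes>\<^bsub>G\<^esub> h) k z = blinfun_apply (u g) (e h k z) + e g (h \<otimes>\<^bsub>G\<^esub> k) z - e g h (blinfun_apply (v k) z)"
    if g: "g \<in> carrier G" and h: "h \<in> carrier G" and k: "k \<in> carrier G" for g h k z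
    unfolding e_def using g h k
    by (simp add: assoc mc umul vmul blinfun.diff_right blinfun.add_right algebra_simps)
  have elin: "e g k (a *\<^sub>R y + b *\<^sub>R y') = a *\<^sub>R e g k y + b *\<^sub>R e g k y'"
    if g: "g \<in> carrier G" and k: "k \<in> carrier G" and y: "y \<in> Y00" and y': "y' \<in> Y00" for g k a b y y'
  proof -
    have Ly: "a *\<^sub>R y + b *\<^sub>R y' \<in> Y00" using Yadd Yscale y y' by blast
    have Ll: "\<And>h. h \<in> carrier G \<Longrightarrow> L h (a *\<^sub>R y + b *\<^sub>R y') = a *\<^sub>R L h y + b *\<^sub>R L h y'"
      using assms(13) y y' unfolding linear_on_def by blast
    have Ll2: "L g (a *\<^sub>R blinfun_apply (v k) y + b *\<^sub>R blinfun_apply (v k) y') = a *\<^sub>R L g (blinfun_apply (v k) y) + b *\<^sub>R L g (blinfun_apply (v k) y')"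
      using assms(13) vY y y' g k unfolding linear_on_def by blast
    have "\<iota> (e g k (a *\<^sub>R y + b *\<^sub>R y')) = \<iota> (a *\<^sub>R e g k y + b *\<^sub>R e g k y')"
      unfolding iadd iscale eL[OF g k Ly] eL[OF g k y] eL[OF g k y']
      using g k mc Ll Ll2 by (simp add: blinfun.add_right blinfun.scaleR_right uinf_add uinf_scale uinf_diff algebra_simps)
    thus ?thesis using assms(7) by (simp add: inj_eq)
  qed
  define Bc where "Bc = Be * Cv"
  have Bc0: "0 \<le> Bc" unfolding Bc_def using Be0 Cv0 by simp
  have wbd: "\<forall>k\<in>carrier G. norm (e g (h \<otimes>\<^bsub>G\<^esub> k) (blinfun_apply (v (inv\<^bsub>G\<^esub> k)) y)) \<le> Bc * norm y"
    if g: "g \<in> carrier G" and h: "h \<in> carrier G" and y: "y \<in> Y00" for g h y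
  proof
    fix k assume k: "k \<in> carrier G"
    have "norm (e g (h \<otimes>\<^bsub>G\<^esub> k) (blinfun_apply (v (inv\<^bsub>G\<^esub> k)) y)) \<le> Be * norm (blinfun_apply (v (inv\<^bsub>G\<^esub> k)) y)"
      using ebd[OF g mc[OF h k] vY[OF ic[OF k] y]] .
    also have "\<dots> \<le> Be * (Cv * norm y)" using vbd[OF ic[OF k]] Be0 by (simp add: mult_left_mono)
    finally show "norm (e g (h \<otimes>\<^bsub>G\<^esub> k) (blinfun_apply (v (inv\<^bsub>G\<^esub> k)) y)) \<le> Bc * norm y"
      unfolding Bc_def by (simp add: mult.assoc)
  qed
  have wbd1: "\<forall>k\<in>carrier G. norm (e g k (blinfun_apply (v (inv\<^bsub>G\<^esub> k)) y)) \<le> Bc * norm y"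
    if g: "g \<in> carrier G" and y: "y \<in> Y00" for g y
  proof -
    have "\<forall>k\<in>carrier G. \<one>\<^bsub>G\<^esub> \<otimes>\<^bsub>G\<^esub> k = k" using grp by (simp add: group.is_monoid monoid.l_one)
    thus ?thesis using wbd[OF g one y] by simp
  qed
  define c where "c g y = A.avg (\<lambda>k. e g k (blinfun_apply (v (inv\<^bsub>G\<^esub> k)) y))" for g y
  have cbd: "norm (c g y) \<le> norm P * Bc * norm y" if g: "g \<in> carrier G" and y: "y \<in> Y00" for g y
    unfolding c_def using A.avg_norm[OF wbd1[OF g y]] by (simp add: mult.assoc)
  have clin: "c g (a *\<^sub>R y + b *\<^sub>R y') = a *\<^sub>R c g y + b *\<^sub>R c g y'"
    if g: "g \<in> carrier G" and y: "y \<in> Y00" and y': "y' \<in> Y00" for g a b y y'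
  proof -
    let ?w = "\<lambda>k. e g k (blinfun_apply (v (inv\<^bsub>G\<^esub> k)) y)"
    let ?w' = "\<lambda>k. e g k (blinfun_apply (v (inv\<^bsub>G\<^esub> k)) y')"
    have "c g (a *\<^sub>R y + b *\<^sub>R y') = A.avg (\<lambda>k. a *\<^sub>R ?w k + b *\<^sub>R ?w' k)"
      unfolding c_def
      by (rule A.avg_cong) (use elin g ic vY y y' in \<open>simp add: blinfun.add_right blinfun.scaleR_right\<close>)
    also have "\<dots> = A.avg (\<lambda>k. a *\<^sub>R ?w k) + A.avg (\<lambda>k. b *\<^sub>R ?w' k)"
    proof (rule A.avg_add)
      show "\<forall>k\<in>carrier G. norm (a *\<^sub>R ?w k) \<le> \<bar>a\<bar> * (Bc * norm y)"
        using wbd1[OF g y] by (simp add: mult_left_mono)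
      show "\<forall>k\<in>carrier G. norm (b *\<^sub>R ?w' k) \<le> \<bar>b\<bar> * (Bc * norm y')"
        using wbd1[OF g y'] by (simp add: mult_left_mono)
    qed
    also have "\<dots> = a *\<^sub>R c g y + b *\<^sub>R c g y'"
      unfolding c_def using A.avg_scale[OF wbd1[OF g y]] A.avg_scale[OF wbd1[OF g y']] by simp
    finally show ?thesis .
  qed
  have ccoc: "e g h y + c (g \<otimes>\<^bsub>G\<^esub> h) y = blinfun_apply (u g) (c h y) + c g (blinfun_apply (v h) y)"
    if g: "g \<in> carrier G" and h: "h \<in> carrier G" and y: "y \<in> Y00" for g h y
  proof -
    let ?z = "\<lambda>k. blinfun_apply (v (inv\<^bsub>G\<^esub> k)) y"
    have zY: "\<And>k. k \<in> carrier G \<Longrightarrow> ?z k \<in> Y00" using vY ic y by blast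
    have b1: "\<forall>k\<in>carrier G. norm (blinfun_apply (u g) (e h k (?z k))) \<le> Cu * (Bc * norm y)"
      using wbd1[OF h y] ubd[OF g] Cu0 by (meson mult_left_mono order_trans)
    have b2: "\<forall>k\<in>carrier G. norm (e g (h \<otimes>\<^bsub>G\<^esub> k) (?z k)) \<le> Bc * norm y" using wbd[OF g h y] .
    have b3: "\<forall>k\<in>carrier G. norm (- e g h y) \<le> norm (e g h y)" by simp
    have b12: "\<forall>k\<in>carrier G. norm (blinfun_apply (u g) (e h k (?z k)) + e g (h \<otimes>\<^bsub>G\<^esub> k) (?z k)) \<le> Cu * (Bc * norm y) + Bc * norm y"
      using b1 b2 by (meson add_mono norm_triangle_ineq order_trans)
    have "c (g \<otimes>\<^bsub>G\<^esub> h) y = A.avg (\<lambda>k. (blinfun_apply (u g) (e h k (?z k)) + e g (h \<otimes>\<^bsub>G\<^esub> k) (?z k)) + (- e g h y))"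
      unfolding c_def
    proof (rule A.avg_cong, intro ballI)
      fix k assume k: "k \<in> carrier G"
      show "e (g \<otimes>\<^bsub>G\<^esub> h) k (?z k) = (blinfun_apply (u g) (e h k (?z k)) + e g (h \<otimes>\<^bsub>G\<^esub> k) (?z k)) + (- e g h y)"
        using ecoc[OF g h k, of "?z k"] vinv1[OF k] by simp
    qed
    also have "\<dots> = A.avg (\<lambda>k. blinfun_apply (u g) (e h k (?z k))) + A.avg (\<lambda>k. e g (h \<otimes>\<^bsub>G\<^esub> k) (?z k)) + A.avg (\<lambda>k. - e g h y)"
      using A.avg_add[OF b12 b3] A.avg_add[OF b1 b2] by simp
    also have "A.avg (\<lambda>k. blinfun_apply (u g) (e h k (?z k))) = blinfun_apply (u g) (c h y)"
      unfolding c_def using A.avg_comm[OF wbd1[OF h y]] P2 g by simp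
    also have "A.avg (\<lambda>k. e g (h \<otimes>\<^bsub>G\<^esub> k) (?z k)) = c g (blinfun_apply (v h) y)"
    proof -
      have "c g (blinfun_apply (v h) y) = A.avg (\<lambda>k. e g (h \<otimes>\<^bsub>G\<^esub> k) (blinfun_apply (v (inv\<^bsub>G\<^esub> (h \<otimes>\<^bsub>G\<^esub> k))) (blinfun_apply (v h) y)))"
        unfolding c_def using A.avg_transl[OF wbd1[OF g vY[OF h y]] h] by simp
      also have "\<dots> = A.avg (\<lambda>k. e g (h \<otimes>\<^bsub>G\<^esub> k) (?z k))"
      proof (rule A.avg_cong, intro ballI)
        fix k assume k: "k \<in> carrier G"
        have "inv\<^bsub>G\<^esub> (h \<otimes>\<^bsub>G\<^esub> k) = inv\<^bsub>G\<^esub> k \<otimes>\<^bsub>G\<^esub> inv\<^bsub>G\<^esub> h"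
          using grp h k by (simp add: group.inv_mult_group)
        hence "blinfun_apply (v (inv\<^bsub>G\<^esub> (h \<otimes>\<^bsub>G\<^esub> k))) (blinfun_apply (v h) y) = ?z k"
          using vmul ic h k vinv2 by simp
        thus "e g (h \<otimes>\<^bsub>G\<^esub> k) (blinfun_apply (v (inv\<^bsub>G\<^esub> (h \<otimes>\<^bsub>G\<^esub> k))) (blinfun_apply (v h) y)) = e g (h \<otimes>\<^bsub>G\<^esub> k) (?z k)"
          by simp
      qed
      finally show ?thesis by simp
    qed
    also have "A.avg (\<lambda>k. - e g h y) = - e g h y" by (rule A.avg_const)
    finally show ?thesis by simp
  qed
  define d where "d g y = L g y + \<iota> (c g y)" for g y
  show ?thesis
  proof (rule exI[of _ d], rule conjI)
    show "compatible_via G \<iota> Y00 uinf v \<Omega> d"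
      unfolding compatible_via_def derivation_def
    proof (intro conjI ballI)
      fix g assume g: "g \<in> carrier G"
      show "linear_on Y00 (d g)"
        unfolding linear_on_def d_def
      proof (intro ballI allI)
        fix y y' a b assume y: "y \<in> Y00" and y': "y' \<in> Y00"
        have "L g (a *\<^sub>R y + b *\<^sub>R y') = a *\<^sub>R L g y + b *\<^sub>R L g y'"
          using assms(13) g y y' unfolding linear_on_def by blast
        thus "L g (a *\<^sub>R y + b *\<^sub>R y') + \<iota> (c g (a *\<^sub>R y + b *\<^sub>R y')) =
              a *\<^sub>R (L g y + \<iota> (c g y)) + b *\<^sub>R (L g y' + \<iota> (c g y'))"
          using clin[OF g y y'] by (simp add: iadd iscale algebra_simps)
      qed
    next
      fix g h y assume g: "g \<in> carrier G" and h: "h \<in> carrier G" and y: "y \<in> Y00"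
      have X: "\<iota> (e g h y) + \<iota> (c (g \<otimes>\<^bsub>G\<^esub> h) y) = \<iota> (blinfun_apply (u g) (c h y)) + \<iota> (c g (blinfun_apply (v h) y))"
        using ccoc[OF g h y] by (metis iadd)
      show "d (g \<otimes>\<^bsub>G\<^esub> h) y = uinf g (d h y) + d g (blinfun_apply (v h) y)"
        unfolding d_def using X eL[OF g h y] uinf_add[OF g] uinf_range[OF g]
        by (simp add: algebra_simps)
    next
      show "\<exists>C. \<forall>g\<in>carrier G. \<forall>y\<in>Y00.
        uinf g (\<Omega> y) - \<Omega> (blinfun_apply (v g) y) + d g y \<in> range \<iota> \<and>
        nX \<iota> (uinf g (\<Omega> y) - \<Omega> (blinfun_apply (v g) y) + d g y) \<le> C * norm y"
      proof (intro exI[of _ "A + norm P * Bc"] ballI)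
        fix g y assume g: "g \<in> carrier G" and y: "y \<in> Y00"
        have eq: "uinf g (\<Omega> y) - \<Omega> (blinfun_apply (v g) y) + d g y = \<iota> (mX g y + c g y)"
          unfolding d_def iadd mXi[OF g y] M_def by (simp add: algebra_simps)
        have "norm (mX g y + c g y) \<le> A * norm y + norm P * Bc * norm y"
          using mXn[OF g y] cbd[OF g y] by (meson add_mono norm_triangle_ineq order_trans)
        thus "uinf g (\<Omega> y) - \<Omega> (blinfun_apply (v g) y) + d g y \<in> range \<iota> \<and>
        nX \<iota> (uinf g (\<Omega> y) - \<Omega> (blinfun_apply (v g) y) + d g y) \<le> (A + norm P * Bc) * norm y"
          unfolding eq nXi by (simp add: algebra_simps)
      qed
    qed
  next
    show "\<exists>C'. \<forall>g\<in>carrier G. \<forall>y\<in>Y00. d g y - L g y \<in> range \<iota> \<and>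
              (norm y \<le> 1 \<longrightarrow> nX \<iota> (d g y - L g y) \<le> C')"
    proof -
      have "d g y - L g y \<in> range \<iota> \<and> (norm y \<le> 1 \<longrightarrow> nX \<iota> (d g y - L g y) \<le> norm P * Bc)"
        if g: "g \<in> carrier G" and y: "y \<in> Y00" for g y
      proof -
        have eq: "d g y - L g y = \<iota> (c g y)" unfolding d_def by simp
        have "norm y \<le> 1 \<Longrightarrow> norm P * Bc * norm y \<le> norm P * Bc * 1"
          using Bc0 mult_left_mono[of "norm y" 1 "norm P * Bc"] by simp
        thus ?thesis unfolding eq nXi using cbd[OF g y] by auto
      qed
      thus ?thesis by blast
    qed
  qed
qed
end
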